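(* For $n\ge1$ and $0\le k\le n$, \[ B^{\mathrm{fmaj}}_{n,k}(q)=[2n-2k]_q\,B^{\mathrm{fmaj}}_{n-1,k}(q)+[2n-2k+1]_q\,B^{\mathrm{fmaj}}_{n-1,k-1}(q), \] where $B^{\mathrm{fmaj}}_{m,k}(q)=0$ when $k<0$ or $k>m$ (and $B^{\mathrm{fmaj}}_{m,m}(q)=1$).
   Context: $[k]_q=1+q+\dots+q^{k-1}$ for $k\ge1$, $[0]_q=0$. $\mathcal{B}_m$ is the group of signed permutations of $[m]$ (bijections $\pi$ of $\{\pm1,\dots,\pm m\}$ with $\pi(-i)=-\pi(i)$, written $\pi=\pi_1\cdots\pi_m$), integers ordered naturally. Set $\pi_0=0$; $\mathrm{Des}_B(\pi)=\{i\in\{0,\dots,m-1\}:\pi_i>\pi_{i+1}\}$, $\mathrm{neg}(\pi)=|\{i:\pi_i<0\}|$, $\mathrm{fmaj}(\pi)=\sum_{i\in\mathrm{Des}_B(\pi)}2i+\mathrm{neg}(\pi)$. For $0\le k\le m$, $\mathcal{B}^{>}_{m,k}=\{(\pi,S):\pi\in\mathcal{B}_m,\ S\subseteq\mathrm{Des}_B(\pi),\ |S|=k\}$, $\mathrm{fmaj}((\pi,S))=\mathrm{fmaj}(\pi)-\sum_{j\in S}\bigl(2|\mathrm{Des}_B(\pi)\cap\{j,\dots,m-1\}|-1\bigr)$, and $B^{\mathrm{fmaj}}_{m,k}(q)=\sum_{(\pi,S)\in\mathcal{B}^{>}_{m,k}}q^{\mathrm{fmaj}((\pi,S))}$. *)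

theory Defs
  imports "HOL-Computational_Algebra.Polynomial"
begin

definition qint :: "nat \<Rightarrow> int poly" where
  "qint k = (\<Sum>i<k. monom 1 i)"

text \<open>Signed permutations of [m], represented as functions on int which are
  bijections of {-m..m}-{0}, odd (pi(-i) = - pi(i)), and the identity elsewhere
  (in particular pi(0) = 0, matching the convention pi_0 = 0).\<close>
definition signed_perms :: "nat \<Rightarrow> (int \<Rightarrow> int) set" where
  "signed_perms m = {\<pi>. bij_betw \<pi> ({-int m..int m} - {0}) ({-int m..int m} - {0})
      \<and> (\<forall>i \<in> {-int m..int m} - {0}. \<pi> (-i) = - \<pi> i)
      \<and> (\<forall>i. i \<notin> {-int m..int m} - {0} \<longrightarrow> \<pi> i = i)}"

definition desB :: "nat \<Rightarrow> (int \<Rightarrow> int) \<Rightarrow> nat set" where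
  "desB m \<pi> = {i \<in> {0..<m}. \<pi> (int i) > \<pi> (int (i + 1))}"

definition negB :: "nat \<Rightarrow> (int \<Rightarrow> int) \<Rightarrow> nat" where
  "negB m \<pi> = card {i \<in> {1..m}. \<pi> (int i) < 0}"

definition fmajB :: "nat \<Rightarrow> (int \<Rightarrow> int) \<Rightarrow> int" where
  "fmajB m \<pi> = int (\<Sum>i\<in>desB m \<pi>. 2 * i) + int (negB m \<pi>)"

definition Bgt :: "nat \<Rightarrow> nat \<Rightarrow> ((int \<Rightarrow> int) \<times> nat set) set" where
  "Bgt m k = {(\<pi>, S). \<pi> \<in> signed_perms m \<and> S \<subseteq> desB m \<pi> \<and> card S = k}"

definition fmajBS :: "nat \<Rightarrow> (int \<Rightarrow> int) \<times> nat set \<Rightarrow> int" where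
  "fmajBS m p = (case p of (\<pi>, S) \<Rightarrow>
     fmajB m \<pi> - (\<Sum>j\<in>S. 2 * int (card (desB m \<pi> \<inter> {j..m-1})) - 1))"

text \<open>fmaj of a pair is always a nonnegative integer; it is used as an exponent.\<close>
definition Bfmaj :: "nat \<Rightarrow> nat \<Rightarrow> int poly" where
  "Bfmaj m k = (\<Sum>p\<in>Bgt m k. monom 1 (nat (fmajBS m p)))"

end

theory Submission
  imports Defs
begin


fun EE :: "'a::comm_ring_1 \<Rightarrow> nat \<Rightarrow> nat \<Rightarrow> 'a" where
  "EE x 0 k = (if k = 0 then 1 else 0)"
| "EE x (Suc r) k = (if k = 0 then 1 else EE x r k + x^(2*r+1) * EE x r (k-1))"

lemma EE_0 [simp]: "EE x r 0 = 1"
  by (cases r) auto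

lemma pw: "a + b = c \<Longrightarrow> x^a * x^b = (x::'a::monoid_mult)^c"
  by (metis power_add)

lemma EE_I2: "(x^(2*j+2) - 1) * EE x r (Suc j) = (x^(2*r+1) - x^(2*j+1)) * EE x r j"
proof (induction r arbitrary: j)
  case 0
  then show ?case by simp
next
  case (Suc r)
  show ?case
  proof (cases j)
    case 0
    have "(x^2 - 1) * EE x r (Suc 0) = (x^(2*r+1) - x) * EE x r 0" using Suc.IH[of 0] by (simp add: power2_eq_square)
    then show ?thesis using 0 by (simp add: algebra_simps power_add power2_eq_square)
  next
    case (Suc i)
    have IHj: "(x^(2*j+2) - 1) * EE x r (Suc j) = (x^(2*r+1) - x^(2*j+1)) * EE x r j" by (rule Suc.IH)
    have IHi: "(x^(2*i+2) - 1) * EE x r (Suc i) = (x^(2*r+1) - x^(2*i+1)) * EE x r i" by (rule Suc.IH)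
    have e1: "EE x (Suc r) (Suc j) = EE x r (Suc j) + x^(2*r+1) * EE x r j" by simp
    have e2: "EE x (Suc r) j = EE x r j + x^(2*r+1) * EE x r i" using Suc by simp
    have "(x^(2*j+2) - 1) * EE x (Suc r) (Suc j) = (x^(2*r+1) - x^(2*j+1)) * EE x r j + x^(2*r+1) * (x^(2*j+2) - 1) * EE x r j"
      using IHj e1 by (simp add: algebra_simps)
    also have "\<dots> = (x^(2*r+2*j+3) - x^(2*j+1)) * EE x r j"
    proof -
      have p: "x^(2*r+1) * x^(2*j+2) = x^(2*r+2*j+3)" by (rule pw) simp
      show ?thesis unfolding p[symmetric] by (simp add: algebra_simps)
    qed
    also have "\<dots> = (x^(2*Suc r+1) - x^(2*j+1)) * EE x (Suc r) j"
    proof -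
      have "(x^(2*Suc r+1) - x^(2*j+1)) * EE x (Suc r) j
        = (x^(2*r+3) - x^(2*j+1)) * EE x r j + x^(2*r+1) * ((x^(2*r+3) - x^(2*j+1)) * EE x r i)"
        unfolding e2 by (simp add: algebra_simps power_add power3_eq_cube)
      also have "(x^(2*r+3) - x^(2*j+1)) * EE x r i = x^2 * ((x^(2*r+1) - x^(2*i+1)) * EE x r i)"
      proof -
        have p1: "x^(2*r+3) = x^2 * x^(2*r+1)" by (rule pw[symmetric]) simp
        have p2: "x^(2*j+1) = x^2 * x^(2*i+1)" using Suc by (intro pw[symmetric]) simp
        show ?thesis unfolding p1 p2 by (simp add: algebra_simps)
      qed
      also have "\<dots> = x^2 * ((x^(2*i+2) - 1) * EE x r j)" using IHi Suc by simp
      finally have F: "(x^(2*Suc r+1) - x^(2*j+1)) * EE x (Suc r) j = (x^(2*r+3) - x^(2*j+1)) * EE x r j + x^(2*r+1) * (x^2 * ((x^(2*i+2) - 1) * EE x r j))" .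
      have p1: "x^(2*r+3) = x^(2*r+1) * x^2" by (rule pw[symmetric]) simp
      have p2: "x^(2*i+2) = x^(2*j)" using Suc by simp
      have p3: "x^(2*r+2*j+3) = x^(2*r+1) * x^2 * x^(2*j)" by (simp add: power_add power2_eq_square power3_eq_cube algebra_simps)
      have p4: "x^(2*j+1) = x * x^(2*j)" by simp
      have "(x^(2*r+3) - x^(2*j+1)) * EE x r j + x^(2*r+1) * (x^2 * ((x^(2*i+2) - 1) * EE x r j)) = (x^(2*r+2*j+3) - x^(2*j+1)) * EE x r j"
        unfolding p1 p2 p3 p4 by (simp add: algebra_simps)
      with F show ?thesis by simp
    qed
    finally show ?thesis .
  qed
qed

lemma rankA: "finite (D::nat set) \<Longrightarrow> (\<Sum>s\<in>D. g (card {i\<in>D. s<i})) = (\<Sum>j<card D. g j)"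
proof (induction D arbitrary: g rule: finite_linorder_max_induct)
  case empty
  then show ?case by simp
next
  case (insert b A)
  have bA: "b \<notin> A" using insert.hyps by auto
  have c0: "card {i\<in>insert b A. b<i} = 0" using insert.hyps by auto
  have c1: "\<And>s. s \<in> A \<Longrightarrow> card {i\<in>insert b A. s<i} = Suc (card {i\<in>A. s<i})"
  proof -
    fix s assume "s \<in> A"
    then have "{i\<in>insert b A. s<i} = insert b {i\<in>A. s<i}" using insert.hyps by auto
    then show "card {i\<in>insert b A. s<i} = Suc (card {i\<in>A. s<i})" using bA insert.hyps by simp
  qed
  have "(\<Sum>s\<in>insert b A. g (card {i\<in>insert b A. s<i})) = g (card {i\<in>insert b A. b<i}) + (\<Sum>s\<in>A. g (card {i\<in>insert b A. s<i}))"
    by (rule sum.insert[OF insert.hyps(1) bA])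
  also have "\<dots> = g 0 + (\<Sum>s\<in>A. g (Suc (card {i\<in>A. s<i})))"
  proof -
    have "(\<Sum>s\<in>A. g (card {i\<in>insert b A. s<i})) = (\<Sum>s\<in>A. g (Suc (card {i\<in>A. s<i})))"
      by (rule sum.cong[OF refl], rule arg_cong[where f=g], erule c1)
    then show ?thesis unfolding c0 by simp
  qed
  also have "(\<Sum>s\<in>A. g (Suc (card {i\<in>A. s<i}))) = (\<Sum>j<card A. g (Suc j))"
    using insert.IH[of "\<lambda>j. g (Suc j)"] by simp
  finally show ?case using bA insert.hyps(1) by (simp del: sum.lessThan_Suc add: sum.lessThan_Suc_shift)
qed

lemma rankB: "D \<subseteq> {0..<N} \<Longrightarrow> (\<Sum>s\<in>{0..<N}-D. g (s + card {i\<in>D. s<i})) = (\<Sum>j\<in>{card D..<N}. g j)"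
proof (induction N arbitrary: D g)
  case 0
  then show ?case by simp
next
  case (Suc N)
  show ?case
  proof (cases "N \<in> D")
    case True
    define D0 where "D0 = D - {N}"
    have D0: "D0 \<subseteq> {0..<N}" using Suc.prems D0_def by auto
    have fD0: "finite D0" using D0 finite_subset by blast
    have DD: "D = insert N D0" "N \<notin> D0" using True D0_def by auto
    have e1: "{0..<Suc N} - D = {0..<N} - D0" using DD by auto
    have e2: "\<And>s. s \<in> {0..<N} - D0 \<Longrightarrow> card {i\<in>D. s<i} = Suc (card {i\<in>D0. s<i})"
    proof -
      fix s assume "s \<in> {0..<N} - D0"
      then have "{i\<in>D. s<i} = insert N {i\<in>D0. s<i}" using DD by auto
      then show "card {i\<in>D. s<i} = Suc (card {i\<in>D0. s<i})" using DD fD0 by simp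
    qed
    have "(\<Sum>s\<in>{0..<Suc N}-D. g (s + card {i\<in>D. s<i})) = (\<Sum>s\<in>{0..<N}-D0. g (Suc (s + card {i\<in>D0. s<i})))"
      unfolding e1 by (rule sum.cong) (auto simp: e2)
    also have "\<dots> = (\<Sum>j\<in>{card D0..<N}. g (Suc j))" using Suc.IH[OF D0, of "\<lambda>j. g (Suc j)"] by simp
    also have "\<dots> = (\<Sum>j\<in>{Suc (card D0)..<Suc N}. g j)" by (rule sum.shift_bounds_Suc_ivl[symmetric])
    finally show ?thesis using DD fD0 by simp
  next
    case False
    have D: "D \<subseteq> {0..<N}" using Suc.prems False by (auto simp: subset_iff less_Suc_eq)
    have cD: "card D \<le> N" using card_mono[OF _ D] by simp
    have e1: "{0..<Suc N} - D = insert N ({0..<N} - D)" using False by auto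
    have e2: "{i\<in>D. N<i} = {}" using D by auto
    have "(\<Sum>s\<in>{0..<Suc N}-D. g (s + card {i\<in>D. s<i})) = g N + (\<Sum>s\<in>{0..<N}-D. g (s + card {i\<in>D. s<i}))"
      unfolding e1 by (simp add: e2)
    also have "\<dots> = g N + (\<Sum>j\<in>{card D..<N}. g j)" using Suc.IH[OF D] by simp
    finally show ?thesis using cD by (simp add: sum.atLeastLessThan_Suc add.commute)
  qed
qed

lemma geo1: "((x::'a::comm_ring_1) - 1) * (1 + (\<Sum>j<r. x^(2*j+1) + x^(2*j+2))) = x^(2*r+1) - 1"
  by (induction r) (simp_all add: algebra_simps power2_eq_square)

lemma geo2: "r \<le> m \<Longrightarrow> ((x::'a::comm_ring_1) - 1) * ((\<Sum>j\<in>{r..<m}. x^(2*j+2)) + (\<Sum>j\<in>{r..<Suc m}. x^(2*j+1))) = x^(2*m+2) - x^(2*r+1)"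
proof (induction m rule: dec_induct)
  case base
  then show ?case by (simp add: algebra_simps)
next
  case (step m)
  have a: "(\<Sum>j\<in>{r..<Suc m}. x^(2*j+2)) = (\<Sum>j\<in>{r..<m}. x^(2*j+2)) + x^(2*m+2)"
    by (rule sum.atLeastLessThan_Suc) (use step.hyps in auto)
  have b: "(\<Sum>j\<in>{r..<Suc (Suc m)}. x^(2*j+1)) = (\<Sum>j\<in>{r..<Suc m}. x^(2*j+1)) + x^(2*Suc m+1)"
    by (rule sum.atLeastLessThan_Suc) (use step.hyps in auto)
  have p1: "x^(2*Suc m+1) = x^(2*m+2) * x" by simp
  have p2: "x^(2*Suc m+2) = x^(2*m+2) * x * x" by simp
  show ?case unfolding a b p1 p2 using step.IH by (simp add: algebra_simps)
qed

lemma qint_mult: "(qint k) * ([:0,1:] - 1) = [:0,1:]^k - 1"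
  unfolding qint_def monom_altdef using power_diff_1_eq[of "[:0,1::int:]" k] by (simp add: mult.commute)

lemma subsets_insert_split:
  assumes "b \<notin> A" "finite A"
  shows "{S. S \<subseteq> insert b A \<and> card S = Suc k} = {S. S \<subseteq> A \<and> card S = Suc k} \<union> insert b ` {T. T \<subseteq> A \<and> card T = k}"
proof (intro equalityI subsetI)
  fix S assume "S \<in> {S. S \<subseteq> insert b A \<and> card S = Suc k}"
  then have S: "S \<subseteq> insert b A" "card S = Suc k" by auto
  show "S \<in> {S. S \<subseteq> A \<and> card S = Suc k} \<union> insert b ` {T. T \<subseteq> A \<and> card T = k}"
  proof (cases "b \<in> S")
    case True
    have fS: "finite S" using S(1) assms(2) finite_subset by blast
    have "S = insert b (S - {b})" using True by auto
    moreover have "S - {b} \<subseteq> A" "card (S - {b}) = k" using S True fS by auto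
    ultimately show ?thesis by blast
  next
    case False
    then show ?thesis using S by auto
  qed
next
  fix S assume "S \<in> {S. S \<subseteq> A \<and> card S = Suc k} \<union> insert b ` {T. T \<subseteq> A \<and> card T = k}"
  then show "S \<in> {S. S \<subseteq> insert b A \<and> card S = Suc k}"
  proof
    assume "S \<in> {S. S \<subseteq> A \<and> card S = Suc k}" then show ?thesis by auto
  next
    assume "S \<in> insert b ` {T. T \<subseteq> A \<and> card T = k}"
    then obtain T where T: "T \<subseteq> A" "card T = k" "S = insert b T" by auto
    have "finite T" using T(1) assms(2) finite_subset by blast
    moreover have "b \<notin> T" using T(1) assms(1) by auto
    ultimately show ?thesis using T by auto
  qed
qed

lemma markC: "finite (D::nat set) \<Longrightarrow>
  (\<Sum>S\<in>{S. S\<subseteq>D \<and> card S = k}. (x::'a::comm_ring_1)^(\<Sum>j\<in>S. 2*(card D - card {i\<in>D. j \<le> i}) + 1)) = EE x (card D) k"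
proof (induction D arbitrary: k rule: finite_linorder_max_induct)
  case empty
  show ?case
  proof (cases k)
    case 0
    then have e: "{S. S \<subseteq> {} \<and> card S = k} = {{}}" by auto
    show ?thesis unfolding e using 0 by simp
  next
    case (Suc k')
    then have e: "{S. S \<subseteq> {} \<and> card S = k} = {}" by auto
    show ?thesis unfolding e using Suc by simp
  qed
next
  case (insert b A)
  have bA: "b \<notin> A" using insert.hyps by auto
  have fA: "finite A" by fact
  let ?D = "insert b A"
  have cD: "card ?D = Suc (card A)" using bA fA by simp
  have cj: "\<And>j. j \<in> A \<Longrightarrow> card {i\<in>?D. j \<le> i} = Suc (card {i\<in>A. j \<le> i})"
  proof -
    fix j assume "j \<in> A"
    then have "{i\<in>?D. j \<le> i} = insert b {i\<in>A. j \<le> i}" using insert.hyps by auto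
    then show "card {i\<in>?D. j \<le> i} = Suc (card {i\<in>A. j \<le> i})" using bA fA by simp
  qed
  have cb: "card {i\<in>?D. b \<le> i} = 1"
  proof -
    have "{i\<in>?D. b \<le> i} = {b}" using insert.hyps by auto
    then show ?thesis by simp
  qed
  have ex: "\<And>S. S \<subseteq> A \<Longrightarrow> (\<Sum>j\<in>S. 2*(card ?D - card {i\<in>?D. j \<le> i}) + 1) = (\<Sum>j\<in>S. 2*(card A - card {i\<in>A. j \<le> i}) + 1)"
  proof (rule sum.cong[OF refl])
    fix S j assume "S \<subseteq> A" "j \<in> S"
    then have jA: "j \<in> A" by auto
    show "2*(card ?D - card {i\<in>?D. j \<le> i}) + 1 = 2*(card A - card {i\<in>A. j \<le> i}) + 1"
      unfolding cD cj[OF jA] by simp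
  qed
  show ?case
  proof (cases k)
    case 0
    have e: "{S. S \<subseteq> ?D \<and> card S = k} = {{}}" using 0 fA by (auto dest: finite_subset[where B="?D"])
    show ?thesis unfolding e using 0 by simp
  next
    case (Suc k')
    have split: "{S. S \<subseteq> ?D \<and> card S = k} = {S. S \<subseteq> A \<and> card S = Suc k'} \<union> insert b ` {T. T \<subseteq> A \<and> card T = k'}"
      using subsets_insert_split[OF bA fA] Suc by simp
    have fin1: "finite {S. S \<subseteq> A \<and> card S = Suc k'}" using fA by simp
    have fin2: "finite (insert b ` {T. T \<subseteq> A \<and> card T = k'})" using fA by simp
    have disj: "{S. S \<subseteq> A \<and> card S = Suc k'} \<inter> insert b ` {T. T \<subseteq> A \<and> card T = k'} = {}" using bA by auto
    have inj: "inj_on (insert b) {T. T \<subseteq> A \<and> card T = k'}"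
      unfolding inj_on_def using bA by (metis (mono_tags, lifting) insert_ident mem_Collect_eq subset_iff)
    let ?F = "\<lambda>S. x^(\<Sum>j\<in>S. 2*(card ?D - card {i\<in>?D. j \<le> i}) + 1)"
    have s1: "sum ?F {S. S \<subseteq> A \<and> card S = Suc k'} = EE x (card A) (Suc k')"
    proof -
      have "sum ?F {S. S \<subseteq> A \<and> card S = Suc k'} = (\<Sum>S\<in>{S. S \<subseteq> A \<and> card S = Suc k'}. x^(\<Sum>j\<in>S. 2*(card A - card {i\<in>A. j \<le> i}) + 1))"
        by (intro sum.cong refl arg_cong[where f="(^) x"] ex) auto
      also have "\<dots> = EE x (card A) (Suc k')" by (rule insert.IH)
      finally show ?thesis .
    qed
    have s2: "sum ?F (insert b ` {T. T \<subseteq> A \<and> card T = k'}) = x^(2*card A+1) * EE x (card A) k'"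
    proof -
      have "sum ?F (insert b ` {T. T \<subseteq> A \<and> card T = k'}) = sum (?F \<circ> insert b) {T. T \<subseteq> A \<and> card T = k'}"
        by (rule sum.reindex[OF inj])
      also have "\<dots> = (\<Sum>T\<in>{T. T \<subseteq> A \<and> card T = k'}. x^(2*card A+1) * x^(\<Sum>j\<in>T. 2*(card A - card {i\<in>A. j \<le> i}) + 1))"
      proof (rule sum.cong[OF refl])
        fix T assume T: "T \<in> {T. T \<subseteq> A \<and> card T = k'}"
        have fT: "finite T" using T fA finite_subset by blast
        have bT: "b \<notin> T" using T bA by auto
        have "(\<Sum>j\<in>insert b T. 2*(card ?D - card {i\<in>?D. j \<le> i}) + 1) = (2*(card ?D - card {i\<in>?D. b \<le> i}) + 1) + (\<Sum>j\<in>T. 2*(card ?D - card {i\<in>?D. j \<le> i}) + 1)"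
          by (rule sum.insert[OF fT bT])
        also have "\<dots> = (2*card A + 1) + (\<Sum>j\<in>T. 2*(card A - card {i\<in>A. j \<le> i}) + 1)"
          using ex[of T] T cb cD by simp
        finally show "(?F \<circ> insert b) T = x^(2*card A+1) * x^(\<Sum>j\<in>T. 2*(card A - card {i\<in>A. j \<le> i}) + 1)"
          by (simp add: power_add)
      qed
      also have "\<dots> = x^(2*card A+1) * EE x (card A) k'"
        unfolding sum_distrib_left[symmetric] insert.IH[of k'] ..
      finally show ?thesis .
    qed
    have "sum ?F {S. S \<subseteq> ?D \<and> card S = k} = EE x (card A) (Suc k') + x^(2*card A+1) * EE x (card A) k'"
      unfolding split sum.union_disjoint[OF fin1 fin2 disj] s1 s2 ..
    then show ?thesis using Suc cD by simp
  qed
qed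



definition sl :: "nat \<Rightarrow> int list set" where
  "sl m = {xs. length xs = m \<and> distinct (map abs xs) \<and> set (map abs xs) = {1..int m}}"

definition DL :: "int list \<Rightarrow> nat set" where
  "DL xs = {i. i < length xs \<and> (0#xs)!i > (0#xs)!(Suc i)}"

definition negL :: "int list \<Rightarrow> nat" where
  "negL xs = length (filter (\<lambda>x. x < 0) xs)"

definition fN :: "int list \<Rightarrow> nat" where
  "fN xs = (\<Sum>i\<in>DL xs. 2*i) + negL xs"

definition ins :: "nat \<Rightarrow> int \<Rightarrow> int list \<Rightarrow> int list" where
  "ins s e xs = take s xs @ e # drop s xs"

lemma DL_sub: "DL xs \<subseteq> {0..<length xs}"
  unfolding DL_def by auto

lemma finite_DL[simp]: "finite (DL xs)"
  using DL_sub finite_subset by blast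

lemma length_ins[simp]: "s \<le> length xs \<Longrightarrow> length (ins s e xs) = Suc (length xs)"
  unfolding ins_def by simp

lemma ins_v1: "s \<le> length xs \<Longrightarrow> j \<le> s \<Longrightarrow> (0 # ins s e xs) ! j = (0 # xs) ! j"
  unfolding ins_def by (cases j) (auto simp: nth_append)

lemma ins_v2: "s \<le> length xs \<Longrightarrow> (0 # ins s e xs) ! Suc s = e"
  unfolding ins_def by (simp add: nth_append)

lemma ins_v3: "s \<le> length xs \<Longrightarrow> s < j \<Longrightarrow> j \<le> length xs \<Longrightarrow> (0 # ins s e xs) ! Suc j = (0 # xs) ! j"
proof -
  assume a: "s \<le> length xs" "s < j" "j \<le> length xs"
  obtain j' where j': "j = Suc j'" using a by (cases j) auto
  have "(0 # ins s e xs) ! Suc j = (e # drop s xs) ! (j - s)" unfolding ins_def using a by (simp add: nth_append)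
  also have "\<dots> = drop s xs ! (j' - s)" using a j' by (simp add: Suc_diff_le)
  also have "\<dots> = xs ! j'" using a j' by simp
  finally show ?thesis using j' by simp
qed

lemma DL_ins:
  assumes s: "s \<le> length xs" and b: "\<forall>x\<in>set xs. \<bar>x\<bar> < \<bar>e\<bar>" and e0: "e \<noteq> 0"
  shows "DL (ins s e xs) = {i\<in>DL xs. i<s} \<union> Suc ` {i\<in>DL xs. s<i} \<union>
          (if e > 0 then (if s < length xs then {Suc s} else {}) else {s})"
proof -
  let ?w = "0 # xs" and ?v = "0 # ins s e xs"
  have bw: "\<And>j. j \<le> length xs \<Longrightarrow> \<bar>?w ! j\<bar> < \<bar>e\<bar>"
  proof -
    fix j assume j: "j \<le> length xs"
    show "\<bar>?w ! j\<bar> < \<bar>e\<bar>"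
    proof (cases j)
      case 0 then show ?thesis using e0 by simp
    next
      case (Suc j') then show ?thesis using j b by simp
    qed
  qed
  show ?thesis
  proof (intro set_eqI iffI)
    fix i assume "i \<in> DL (ins s e xs)"
    then have i: "i < Suc (length xs)" "?v ! i > ?v ! Suc i" unfolding DL_def using s by auto
    consider "i < s" | "i = s" | "i = Suc s" | "Suc s < i" by linarith
    then show "i \<in> {i\<in>DL xs. i<s} \<union> Suc ` {i\<in>DL xs. s<i} \<union>
          (if e > 0 then (if s < length xs then {Suc s} else {}) else {s})"
    proof cases
      case 1
      then have "i \<in> DL xs" using i ins_v1[OF s, of i e] ins_v1[OF s, of "Suc i" e] s unfolding DL_def by auto
      then show ?thesis using 1 by auto
    next
      case 2
      then have "?w ! s > e" using i ins_v1[OF s, of s e] ins_v2[OF s, of e] by simp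
      then have "e < 0" using bw[OF s] by linarith
      then show ?thesis using 2 by auto
    next
      case 3
      then have "e > ?w ! Suc s" "Suc s \<le> length xs" using i ins_v2[OF s, of e] ins_v3[OF s, of "Suc s" e] by auto
      then have "e > 0" using bw[of "Suc s"] by linarith
      then show ?thesis using 3 i by auto
    next
      case 4
      then obtain i' where i': "i = Suc i'" "s < i'" by (cases i) auto
      then have "?w ! i' > ?w ! Suc i'" "i' < length xs"
        using i ins_v3[OF s, of i' e] ins_v3[OF s, of "Suc i'" e] by auto
      then have "i' \<in> DL xs" unfolding DL_def by auto
      then show ?thesis using i' by auto
    qed
  next
    fix i assume "i \<in> {i\<in>DL xs. i<s} \<union> Suc ` {i\<in>DL xs. s<i} \<union>
          (if e > 0 then (if s < length xs then {Suc s} else {}) else {s})"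
    then consider "i \<in> DL xs" "i < s" | i' where "i' \<in> DL xs" "s < i'" "i = Suc i'"
      | "e > 0" "s < length xs" "i = Suc s" | "e < 0" "i = s"
      using e0 by (auto split: if_splits)
    then show "i \<in> DL (ins s e xs)"
    proof cases
      case 1
      then show ?thesis using ins_v1[OF s, of i e] ins_v1[OF s, of "Suc i" e] s unfolding DL_def by auto
    next
      case 2
      then show ?thesis using ins_v3[OF s, of i' e] ins_v3[OF s, of "Suc i'" e] s unfolding DL_def by auto
    next
      case 3
      then show ?thesis using ins_v2[OF s, of e] ins_v3[OF s, of "Suc s" e] s bw[of "Suc s"] unfolding DL_def by auto
    next
      case 4
      then show ?thesis using ins_v1[OF s, of s e] ins_v2[OF s, of e] s bw[OF s] unfolding DL_def by auto
    qed
  qed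
qed

lemma negL_ins: "s \<le> length xs \<Longrightarrow> negL (ins s e xs) = negL xs + (if e < 0 then 1 else 0)"
proof -
  assume s: "s \<le> length xs"
  have "length (filter (\<lambda>x. x < 0) (take s xs)) + length (filter (\<lambda>x. x < 0) (drop s xs)) = length (filter (\<lambda>x. x < 0) xs)"
    by (metis append_take_drop_id filter_append length_append)
  then show ?thesis unfolding negL_def ins_def by simp
qed

lemma split_stats:
  assumes fD: "finite (D::nat set)"
  shows "card ({i\<in>D. i<s} \<union> Suc ` {i\<in>D. s<i}) + (if s\<in>D then 1 else 0) = card D"
    and "(\<Sum>i\<in>{i\<in>D. i<s} \<union> Suc ` {i\<in>D. s<i}. i) + (if s\<in>D then s else 0) = (\<Sum>i\<in>D. i) + card {i\<in>D. s<i}"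
proof -
  let ?L = "{i\<in>D. i<s}" and ?R = "{i\<in>D. s<i}"
  have fL: "finite ?L" and fR: "finite ?R" using fD by auto
  have d1: "?L \<inter> Suc ` ?R = {}" by auto
  have cR: "card (Suc ` ?R) = card ?R" by (simp add: card_image)
  have sR: "(\<Sum>i\<in>Suc ` ?R. i) = (\<Sum>i\<in>?R. i) + card ?R"
  proof -
    have "(\<Sum>i\<in>Suc ` ?R. i) = (\<Sum>i\<in>?R. i + 1)" by (simp add: sum.reindex)
    also have "\<dots> = (\<Sum>i\<in>?R. i) + card ?R" by (simp only: sum.distrib) simp
    finally show ?thesis .
  qed
  have D: "D = ?L \<union> ?R \<union> (D \<inter> {s})" by auto
  have cD: "card D = card ?L + card ?R + card (D \<inter> {s})"
    by (subst D, subst card_Un_disjoint, use fD in auto, subst card_Un_disjoint, use fD in auto)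
  have sD: "(\<Sum>i\<in>D. i) = (\<Sum>i\<in>?L. i) + (\<Sum>i\<in>?R. i) + (\<Sum>i\<in>D \<inter> {s}. i)"
    by (subst D, subst sum.union_disjoint, use fD in auto, subst sum.union_disjoint, use fD in auto)
  have e1: "card (D \<inter> {s}) = (if s\<in>D then 1 else 0)" by auto
  have e2: "(\<Sum>i\<in>D \<inter> {s}. i) = (if s\<in>D then s else 0)" by auto
  show "card (?L \<union> Suc ` ?R) + (if s\<in>D then 1 else 0) = card D"
    using card_Un_disjoint[OF fL _ d1] fR cR cD e1 by simp
  show "(\<Sum>i\<in>?L \<union> Suc ` ?R. i) + (if s\<in>D then s else 0) = (\<Sum>i\<in>D. i) + card ?R"
  proof -
    have "(\<Sum>i\<in>?L \<union> Suc ` ?R. i) = (\<Sum>i\<in>?L. i) + (\<Sum>i\<in>Suc ` ?R. i)"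
      by (rule sum.union_disjoint) (use fL fR d1 in auto)
    then show ?thesis using sR sD e2 by linarith
  qed
qed

lemma sl_bound: "xs \<in> sl m \<Longrightarrow> x \<in> set xs \<Longrightarrow> 1 \<le> \<bar>x\<bar> \<and> \<bar>x\<bar> \<le> int m"
proof -
  assume "xs \<in> sl m" "x \<in> set xs"
  then have "\<bar>x\<bar> \<in> set (map abs xs)" "set (map abs xs) = {1..int m}" unfolding sl_def by auto
  then show ?thesis by auto
qed

lemma sl_length: "xs \<in> sl m \<Longrightarrow> length xs = m"
  unfolding sl_def by auto

lemma sum2: "(\<Sum>i\<in>A. 2*(i::nat)) = 2 * (\<Sum>i\<in>A. i)"
  by (simp add: sum_distrib_left)

lemma ins_stats:
  assumes xs: "xs \<in> sl m" and s: "s \<le> m" and e: "e = int (Suc m) \<or> e = - int (Suc m)"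
  shows "card (DL (ins s e xs)) = (if (e>0 \<and> s=m) \<or> s \<in> DL xs then card (DL xs) else Suc (card (DL xs)))"
    and "fN (ins s e xs) = fN xs + (if e>0 \<and> s=m then 0 else 2*card {i\<in>DL xs. s<i} + (if e>0 then 2 else 1) + (if s \<in> DL xs then 0 else 2*s))"
proof -
  let ?D = "DL xs" and ?y = "ins s e xs"
  let ?T = "{i\<in>?D. i<s} \<union> Suc ` {i\<in>?D. s<i}"
  have len: "length xs = m" using sl_length[OF xs] .
  have sl: "s \<le> length xs" using len s by simp
  have b: "\<forall>x\<in>set xs. \<bar>x\<bar> < \<bar>e\<bar>" using sl_bound[OF xs] e by fastforce
  have e0: "e \<noteq> 0" using e by auto
  have Dsub: "?D \<subseteq> {0..<m}" using DL_sub[of xs] len by simp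
  have DLy: "DL ?y = ?T \<union> (if e > 0 then (if s < m then {Suc s} else {}) else {s})"
    using DL_ins[OF sl b e0] len by simp
  have negy: "negL ?y = negL xs + (if e < 0 then 1 else 0)" using negL_ins[OF sl] .
  have st1: "card ?T + (if s\<in>?D then 1 else 0) = card ?D"
   and st2: "(\<Sum>i\<in>?T. i) + (if s\<in>?D then s else 0) = (\<Sum>i\<in>?D. i) + card {i\<in>?D. s<i}"
    using split_stats[of ?D s] by auto
  have fT: "finite ?T" by auto
  have "card (DL ?y) = (if (e>0 \<and> s=m) \<or> s \<in> ?D then card ?D else Suc (card ?D)) \<and>
        fN ?y = fN xs + (if e>0 \<and> s=m then 0 else 2*card {i\<in>?D. s<i} + (if e>0 then 2 else 1) + (if s \<in> ?D then 0 else 2*s))"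
  proof (cases "e > 0 \<and> s = m")
    case True
    have "?T = ?D" using True Dsub by auto
    then have "DL ?y = ?D" using DLy True by simp
    then show ?thesis using True negy unfolding fN_def by simp
  next
    case False
    define t where "t = (if e > 0 then Suc s else s)"
    have DLy': "DL ?y = insert t ?T" using DLy False unfolding t_def using s by auto
    have tT: "t \<notin> ?T" unfolding t_def by auto
    have c: "card (DL ?y) = Suc (card ?T)" using DLy' tT fT by simp
    have sm: "(\<Sum>i\<in>DL ?y. i) = t + (\<Sum>i\<in>?T. i)" using DLy' tT fT by simp
    have "fN ?y = 2 * (t + (\<Sum>i\<in>?T. i)) + negL xs + (if e < 0 then 1 else 0)"
      unfolding fN_def sum2 sm negy by simp
    moreover have "fN xs = 2 * (\<Sum>i\<in>?D. i) + negL xs" unfolding fN_def sum2 ..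
    ultimately show ?thesis using c st1 st2 False e0 unfolding t_def
      by (cases "s \<in> ?D"; cases "e > 0"; simp; linarith)
  qed
  then show "card (DL ?y) = (if (e>0 \<and> s=m) \<or> s \<in> ?D then card ?D else Suc (card ?D))"
    and "fN ?y = fN xs + (if e>0 \<and> s=m then 0 else 2*card {i\<in>?D. s<i} + (if e>0 then 2 else 1) + (if s \<in> ?D then 0 else 2*s))"
    by auto
qed



lemma map_ins: "map f (ins s e xs) = ins s (f e) (map f xs)"
  unfolding ins_def by (simp add: take_map drop_map)

lemma set_ins: "set (ins s e xs) = insert e (set xs)"
proof -
  have "set xs = set (take s xs) \<union> set (drop s xs)" by (metis append_take_drop_id set_append)
  then show ?thesis unfolding ins_def by auto
qed

lemma distinct_mid: "distinct (A @ e # B) = (distinct (A @ B) \<and> e \<notin> set (A @ B))"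
  by auto

lemma distinct_ins: "distinct (ins s e xs) = (distinct xs \<and> e \<notin> set xs)"
  unfolding ins_def distinct_mid append_take_drop_id ..

lemma ins_in_sl:
  assumes xs: "xs \<in> sl m" and s: "s \<le> m" and e: "\<bar>e\<bar> = int (Suc m)"
  shows "ins s e xs \<in> sl (Suc m)"
proof -
  have len: "length xs = m" using sl_length[OF xs] .
  have st: "set (map abs xs) = {1..int m}" and d: "distinct (map abs xs)" using xs unfolding sl_def by auto
  have "set (map abs (ins s e xs)) = insert (int (Suc m)) {1..int m}" unfolding map_ins set_ins st e ..
  also have "\<dots> = {1..int (Suc m)}" by auto
  finally have st': "set (map abs (ins s e xs)) = {1..int (Suc m)}" .
  have "int (Suc m) \<notin> set (map abs xs)" using st by auto
  then have "distinct (map abs (ins s e xs))" unfolding map_ins distinct_ins using d e by simp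
  then show ?thesis unfolding sl_def using st' len s by simp
qed

lemma take_ins: "s \<le> length xs \<Longrightarrow> take s (ins s e xs) = take s xs"
  unfolding ins_def by simp

lemma drop_ins: "s \<le> length xs \<Longrightarrow> drop (Suc s) (ins s e xs) = drop s xs"
  unfolding ins_def by simp

lemma nth_ins_other:
  assumes "s \<le> length xs" "j < Suc (length xs)" "j \<noteq> s"
  shows "ins s e xs ! j \<in> set xs"
proof (cases "j < s")
  case True
  then have "ins s e xs ! j = xs ! j" using assms unfolding ins_def by (simp add: nth_append)
  then show ?thesis using True assms by simp
next
  case False
  then obtain j' where j': "j = Suc j'" "s \<le> j'" using assms by (cases j) auto
  then have "ins s e xs ! j = xs ! j'" using assms unfolding ins_def
    by (simp add: nth_append Suc_diff_le)
  then have "ins s e xs ! j = xs ! (j - 1)" using j' by simp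
  then show ?thesis using False assms by simp
qed

lemma nth_ins_same: "s \<le> length xs \<Longrightarrow> ins s e xs ! s = e"
  unfolding ins_def by (simp add: nth_append)

lemma ins_inj:
  assumes xs: "xs \<in> sl m" and xs': "xs' \<in> sl m" and s: "s \<le> m" and s': "s' \<le> m"
    and e: "\<bar>e\<bar> = int (Suc m)" and e': "\<bar>e'\<bar> = int (Suc m)"
    and eq: "ins s e xs = ins s' e' xs'"
  shows "xs = xs' \<and> s = s' \<and> e = e'"
proof -
  have len: "length xs = m" "length xs' = m" using sl_length xs xs' by auto
  have ss: "s = s'"
  proof (rule ccontr)
    assume ne: "s \<noteq> s'"
    have "ins s e xs ! s' \<in> set xs" using nth_ins_other[of s xs s' e] ne len s s' by auto
    then have "\<bar>ins s e xs ! s'\<bar> \<le> int m" using sl_bound[OF xs] by auto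
    moreover have "ins s' e' xs' ! s' = e'" using nth_ins_same len s' by auto
    ultimately show False using eq e' by simp
  qed
  have ee: "e = e'" using nth_ins_same[of s xs e] nth_ins_same[of s' xs' e'] eq ss len s s' by simp
  have "xs = take s xs @ drop s xs" by simp
  also have "\<dots> = take s (ins s e xs) @ drop (Suc s) (ins s e xs)" using take_ins drop_ins len s by simp
  also have "\<dots> = take s' (ins s' e' xs') @ drop (Suc s') (ins s' e' xs')" using eq ss by simp
  also have "\<dots> = xs'" using take_ins drop_ins len s' by simp
  finally show ?thesis using ss ee by simp
qed

lemma cong_dabs: "a = b \<Longrightarrow> distinct (map abs a) = distinct (map abs (b::int list))"
  by simp

lemma sl_decomp:
  assumes ys: "ys \<in> sl (Suc m)"
  shows "\<exists>xs s e. xs \<in> sl m \<and> s \<le> m \<and> \<bar>e\<bar> = int (Suc m) \<and> ys = ins s e xs"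
proof -
  have len: "length ys = Suc m" using sl_length[OF ys] .
  have st: "set (map abs ys) = {1..int (Suc m)}" and d: "distinct (map abs ys)" using ys unfolding sl_def by auto
  have "int (Suc m) \<in> set (map abs ys)" using st by simp
  then obtain j where j: "j < length ys" "\<bar>ys ! j\<bar> = int (Suc m)" by (auto simp: in_set_conv_nth)
  define xs where "xs = take j ys @ drop (Suc j) ys"
  have lxs: "length xs = m" using j len unfolding xs_def by simp
  have jx: "j \<le> length xs" using j len lxs by simp
  have yins: "ys = ins j (ys ! j) xs"
  proof -
    have h1: "take j xs = take j ys" using j unfolding xs_def by simp
    have h2: "drop j xs = drop (Suc j) ys" using j unfolding xs_def by simp
    show ?thesis unfolding ins_def by (rule trans[OF id_take_nth_drop[OF j(1)]]) (simp only: h1 h2)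
  qed
  have d2: "distinct (map abs xs) \<and> \<bar>ys ! j\<bar> \<notin> set (map abs xs)"
  proof -
    have eqd: "distinct (map abs ys) = distinct (map abs (ins j (ys ! j) xs))" by (rule cong_dabs[OF yins])
    have "distinct (map abs (ins j (ys ! j) xs))" using iffD1[OF eqd d] .
    then show ?thesis unfolding map_ins distinct_ins by simp
  qed
  have "set (map abs ys) = set (map abs (ins j (ys ! j) xs))" by (rule arg_cong[OF yins])
  also have "\<dots> = insert \<bar>ys ! j\<bar> (set (map abs xs))" unfolding map_ins set_ins ..
  finally have "set (map abs ys) = insert \<bar>ys ! j\<bar> (set (map abs xs))" .
  moreover have "int (Suc m) \<notin> set (map abs xs)" using d2 j(2) by simp
  ultimately have "set (map abs xs) = {1..int (Suc m)} - {int (Suc m)}" using st j(2) by (metis Diff_insert_absorb)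
  also have "\<dots> = {1..int m}" by auto
  finally have "xs \<in> sl m" unfolding sl_def using d2 lxs by simp
  then have "xs \<in> sl m \<and> j \<le> m \<and> \<bar>ys ! j\<bar> = int (Suc m) \<and> ys = ins j (ys ! j) xs"
    using j(2) lxs jx by (intro conjI yins) auto
  then show ?thesis by blast
qed



definition toL :: "nat \<Rightarrow> (int \<Rightarrow> int) \<Rightarrow> int list" where
  "toL m \<pi> = map (\<lambda>i. \<pi> (int i)) [1..<Suc m]"

definition fromL :: "nat \<Rightarrow> int list \<Rightarrow> int \<Rightarrow> int" where
  "fromL m xs = (\<lambda>i. if 1 \<le> i \<and> i \<le> int m then xs ! (nat i - 1)
       else if - int m \<le> i \<and> i \<le> -1 then - (xs ! (nat (-i) - 1)) else i)"

lemma sp_props: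
  assumes "\<pi> \<in> signed_perms m"
  shows "bij_betw \<pi> ({-int m..int m} - {0}) ({-int m..int m} - {0})"
    and "\<And>i. i \<in> {-int m..int m} - {0} \<Longrightarrow> \<pi> (-i) = - \<pi> i"
    and "\<And>i. i \<notin> {-int m..int m} - {0} \<Longrightarrow> \<pi> i = i"
  using assms unfolding signed_perms_def by auto

lemma toL_nth: "k < m \<Longrightarrow> toL m \<pi> ! k = \<pi> (int (Suc k))"
  unfolding toL_def by (simp del: upt_Suc of_nat_Suc)

lemma length_toL[simp]: "length (toL m \<pi>) = m"
  unfolding toL_def by simp

lemma toL_sl:
  assumes p: "\<pi> \<in> signed_perms m"
  shows "toL m \<pi> \<in> sl m"
proof -
  let ?M = "{-int m..int m} - {0}"
  note P = sp_props[OF p]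
  have img: "\<pi> ` ?M = ?M" using P(1) by (simp add: bij_betw_def)
  have inj: "inj_on \<pi> ?M" using P(1) by (simp add: bij_betw_def)
  have ma: "map abs (toL m \<pi>) = map (\<lambda>i. \<bar>\<pi> (int i)\<bar>) [1..<Suc m]" unfolding toL_def by simp
  have injA: "inj_on (\<lambda>i. \<bar>\<pi> (int i)\<bar>) {1..<Suc m}"
  proof (rule inj_onI)
    fix a b assume a: "a \<in> {1..<Suc m}" and b: "b \<in> {1..<Suc m}" and eq: "\<bar>\<pi> (int a)\<bar> = \<bar>\<pi> (int b)\<bar>"
    have aM: "int a \<in> ?M" and bM: "int b \<in> ?M" and nbM: "- int b \<in> ?M" using a b by auto
    show "a = b"
    proof (cases "\<pi> (int a) = \<pi> (int b)")
      case True
      then show ?thesis using inj_onD[OF inj True aM bM] by simp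
    next
      case False
      then have "\<pi> (int a) = \<pi> (- int b)" using eq P(2)[OF bM] by auto
      then have "int a = - int b" using inj_onD[OF inj _ aM nbM] by simp
      then show ?thesis using a b by simp
    qed
  qed
  have dist: "distinct (map abs (toL m \<pi>))" unfolding ma using injA by (simp add: distinct_map del: upt_Suc)
  have st: "set (map abs (toL m \<pi>)) = {1..int m}"
  proof (intro equalityI subsetI)
    fix y assume "y \<in> set (map abs (toL m \<pi>))"
    then obtain i where i: "i \<in> {1..<Suc m}" "y = \<bar>\<pi> (int i)\<bar>" unfolding ma by (auto simp del: upt_Suc)
    then have "int i \<in> ?M" by auto
    then have "\<pi> (int i) \<in> ?M" using img by blast
    then show "y \<in> {1..int m}" using i by auto
  next
    fix y assume y: "y \<in> {1..int m}"
    then have "y \<in> ?M" by auto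
    then obtain b where b: "b \<in> ?M" "y = \<pi> b" using img by (metis imageE)
    show "y \<in> set (map abs (toL m \<pi>))"
    proof (cases "b > 0")
      case True
      then have "nat b \<in> {1..<Suc m}" "int (nat b) = b" using b by auto
      then show ?thesis unfolding ma using b y by (auto intro!: image_eqI[where x="nat b"] simp del: upt_Suc)
    next
      case False
      then have nb: "nat (-b) \<in> {1..<Suc m}" "int (nat (-b)) = -b" using b by auto
      have "\<pi> (-b) = - y" using P(2)[OF b(1)] b by simp
      then have "\<bar>\<pi> (int (nat (-b)))\<bar> = y" using nb y by simp
      then show ?thesis unfolding ma using nb by (auto intro!: image_eqI[where x="nat (-b)"] simp del: upt_Suc)
    qed
  qed
  show ?thesis unfolding sl_def using dist st by simp
qed

lemma fromL_M:
  assumes "i \<in> {-int m..int m} - {0}"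
  shows "fromL m xs i = sgn i * xs ! (nat \<bar>i\<bar> - 1)"
  using assms unfolding fromL_def by auto

lemma fromL_sp:
  assumes xs: "xs \<in> sl m"
  shows "fromL m xs \<in> signed_perms m"
proof -
  let ?M = "{-int m..int m} - {0}" and ?f = "fromL m xs"
  have len: "length xs = m" using sl_length[OF xs] .
  have dist: "distinct (map abs xs)" using xs unfolding sl_def by auto
  have idx: "\<And>i. i \<in> ?M \<Longrightarrow> nat \<bar>i\<bar> - 1 < m" by auto
  have bnd: "\<And>i. i \<in> ?M \<Longrightarrow> 1 \<le> \<bar>xs ! (nat \<bar>i\<bar> - 1)\<bar> \<and> \<bar>xs ! (nat \<bar>i\<bar> - 1)\<bar> \<le> int m"
    using sl_bound[OF xs] idx len by (metis nth_mem)
  have into: "?f ` ?M \<subseteq> ?M"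
  proof
    fix y assume "y \<in> ?f ` ?M"
    then obtain i where i: "i \<in> ?M" "y = ?f i" by blast
    have y: "y = sgn i * xs ! (nat \<bar>i\<bar> - 1)" using fromL_M[OF i(1)] i by simp
    have "sgn i = 1 \<or> sgn i = -1" using i by (auto simp: sgn_if)
    then have ay: "\<bar>y\<bar> = \<bar>xs ! (nat \<bar>i\<bar> - 1)\<bar>" using y by (auto simp: abs_mult)
    have "1 \<le> \<bar>y\<bar>" "\<bar>y\<bar> \<le> int m" using bnd[OF i(1)] unfolding ay by auto
    then show "y \<in> ?M" by (cases "y \<ge> 0") auto
  qed
  have inj: "inj_on ?f ?M"
  proof (rule inj_onI)
    fix i j assume i: "i \<in> ?M" and j: "j \<in> ?M" and eq: "?f i = ?f j"
    let ?a = "nat \<bar>i\<bar> - 1" and ?b = "nat \<bar>j\<bar> - 1"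
    have e2: "sgn i * xs ! ?a = sgn j * xs ! ?b" using eq fromL_M[OF i] fromL_M[OF j] by simp
    have si: "sgn i = 1 \<or> sgn i = -1" and sj: "sgn j = 1 \<or> sgn j = -1" using i j by (auto simp: sgn_if)
    have "\<bar>sgn i * xs ! ?a\<bar> = \<bar>sgn j * xs ! ?b\<bar>" using e2 by simp
    moreover have "\<bar>sgn i\<bar> = 1" "\<bar>sgn j\<bar> = 1" using si sj by auto
    ultimately have "\<bar>xs ! ?a\<bar> = \<bar>xs ! ?b\<bar>" by (simp add: abs_mult)
    then have "map abs xs ! ?a = map abs xs ! ?b" using idx[OF i] idx[OF j] len by simp
    then have ab: "?a = ?b" using nth_eq_iff_index_eq[OF dist] idx[OF i] idx[OF j] len by simp
    then have aij: "\<bar>i\<bar> = \<bar>j\<bar>" using i j by auto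
    show "i = j"
    proof (rule ccontr)
      assume "i \<noteq> j"
      then have "sgn i = - sgn j" using aij i j by (auto simp: sgn_if abs_if split: if_splits)
      then have "xs ! ?a = 0" using e2 ab si by auto
      then show False using bnd[OF i] by simp
    qed
  qed
  have bij: "bij_betw ?f ?M ?M" unfolding bij_betw_def using inj endo_inj_surj[OF _ into inj] by simp
  have odd: "\<forall>i\<in>?M. ?f (-i) = - ?f i"
  proof
    fix i assume i: "i \<in> ?M"
    then have "-i \<in> ?M" by auto
    then show "?f (-i) = - ?f i" using fromL_M[OF i] fromL_M[of "-i"] by simp
  qed
  have out: "\<forall>i. i \<notin> ?M \<longrightarrow> ?f i = i" unfolding fromL_def by auto
  show ?thesis unfolding signed_perms_def using bij odd out by blast
qed

lemma toL_fromL: "xs \<in> sl m \<Longrightarrow> toL m (fromL m xs) = xs"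
proof -
  assume xs: "xs \<in> sl m"
  have len: "length xs = m" using sl_length[OF xs] .
  show ?thesis
  proof (rule nth_equalityI)
    show "length (toL m (fromL m xs)) = length xs" using len by simp
    fix k assume "k < length (toL m (fromL m xs))"
    then have k: "k < m" by simp
    then show "toL m (fromL m xs) ! k = xs ! k" unfolding toL_nth[OF k] fromL_def by (simp del: of_nat_Suc)
  qed
qed

lemma fromL_toL: "\<pi> \<in> signed_perms m \<Longrightarrow> fromL m (toL m \<pi>) = \<pi>"
proof -
  assume p: "\<pi> \<in> signed_perms m"
  note P = sp_props[OF p]
  show ?thesis
  proof
    fix i
    show "fromL m (toL m \<pi>) i = \<pi> i"
    proof (cases "1 \<le> i \<and> i \<le> int m")
      case True
      then have "nat i - 1 < m" by auto
      then show ?thesis using True unfolding fromL_def by (simp add: toL_nth)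
    next
      case False
      show ?thesis
      proof (cases "- int m \<le> i \<and> i \<le> -1")
        case True
        then have k: "nat (-i) - 1 < m" by auto
        have iM: "-i \<in> {-int m..int m} - {0}" using True by auto
        have "fromL m (toL m \<pi>) i = - \<pi> (-i)" using True False k unfolding fromL_def by (simp add: toL_nth)
        also have "\<dots> = \<pi> i" using P(2)[OF iM] by simp
        finally show ?thesis .
      next
        case False2: False
        then have "i \<notin> {-int m..int m} - {0}" using False by auto
        then show ?thesis using P(3) False False2 unfolding fromL_def by auto
      qed
    qed
  qed
qed

lemma bij_toL: "bij_betw (toL m) (signed_perms m) (sl m)"
  by (rule bij_betw_byWitness[where f'="fromL m"]) (auto simp: fromL_toL toL_fromL toL_sl fromL_sp)

lemma desB_toL:
  assumes p: "\<pi> \<in> signed_perms m"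
  shows "desB m \<pi> = DL (toL m \<pi>)"
proof -
  have p0: "\<pi> 0 = 0" using sp_props(3)[OF p, of 0] by simp
  have nth0: "\<And>i. i \<le> m \<Longrightarrow> (0 # toL m \<pi>) ! i = \<pi> (int i)"
  proof -
    fix i assume "i \<le> m"
    then show "(0 # toL m \<pi>) ! i = \<pi> (int i)" using p0 by (cases i) (auto simp: toL_nth)
  qed
  show ?thesis unfolding desB_def DL_def
  proof (intro set_eqI)
    fix i
    show "i \<in> {i \<in> {0..<m}. \<pi> (int (i + 1)) < \<pi> (int i)} \<longleftrightarrow> i \<in> {i. i < length (toL m \<pi>) \<and> (0 # toL m \<pi>) ! Suc i < (0 # toL m \<pi>) ! i}"
    proof (cases "i < m")
      case True
      then have "(0 # toL m \<pi>) ! i = \<pi> (int i)" "(0 # toL m \<pi>) ! Suc i = \<pi> (int (i+1))" using nth0[of i] nth0[of "Suc i"] by auto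
      then show ?thesis using True by simp
    next
      case False
      then show ?thesis by simp
    qed
  qed
qed

lemma negB_toL: "negB m \<pi> = negL (toL m \<pi>)"
proof -
  have "negL (toL m \<pi>) = length (filter ((\<lambda>x. x < 0) \<circ> (\<lambda>i. \<pi> (int i))) [1..<Suc m])"
    unfolding negL_def toL_def by (simp add: filter_map)
  also have "\<dots> = card ({x. \<pi> (int x) < 0} \<inter> set [1..<Suc m])" by (simp add: distinct_length_filter)
  also have "{x. \<pi> (int x) < 0} \<inter> set [1..<Suc m] = {i \<in> {1..m}. \<pi> (int i) < 0}" by auto
  finally show ?thesis unfolding negB_def by simp
qed

lemma finite_sl: "finite (sl m)"
proof -
  have "sl m \<subseteq> {xs. set xs \<subseteq> {-int m..int m} \<and> length xs = m}"
  proof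
    fix xs assume a: "xs \<in> sl m"
    have "set xs \<subseteq> {-int m..int m}"
    proof
      fix x assume "x \<in> set xs"
      then have "\<bar>x\<bar> \<le> int m" using sl_bound[OF a] by blast
      then show "x \<in> {-int m..int m}" by (simp add: abs_le_iff)
    qed
    then show "xs \<in> {xs. set xs \<subseteq> {-int m..int m} \<and> length xs = m}" using sl_length[OF a] by simp
  qed
  then show ?thesis using finite_lists_length_eq[of "{-int m..int m}" m] finite_subset by blast
qed

lemma finite_sp: "finite (signed_perms m)"
  using bij_betw_finite[OF bij_toL] finite_sl by blast



abbreviation qX :: "int poly" where "qX \<equiv> [:0,1:]"

lemma monom1: "monom (1::int) n = qX ^ n"
  by (simp add: monom_altdef)

definition GL :: "nat \<Rightarrow> int list \<Rightarrow> int poly" where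
  "GL k xs = (\<Sum>S\<in>{S. S \<subseteq> DL xs \<and> card S = k}.
      monom 1 (nat (int (fN xs) - (\<Sum>j\<in>S. 2 * int (card {i\<in>DL xs. j \<le> i}) - 1))))"

lemma Bfmaj_GL: "Bfmaj m k = (\<Sum>xs\<in>sl m. GL k xs)"
proof -
  let ?B = "\<lambda>\<pi>. {S. S \<subseteq> desB m \<pi> \<and> card S = k}"
  let ?F = "\<lambda>p. monom (1::int) (nat (fmajBS m p))"
  have Bgt: "Bgt m k = Sigma (signed_perms m) ?B" unfolding Bgt_def by auto
  have finB: "\<forall>\<pi>\<in>signed_perms m. finite (?B \<pi>)"
  proof
    fix \<pi>
    have "desB m \<pi> \<subseteq> {0..<m}" unfolding desB_def by auto
    then have "finite (desB m \<pi>)" using finite_subset by blast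
    then have "finite (Pow (desB m \<pi>))" by simp
    moreover have "?B \<pi> \<subseteq> Pow (desB m \<pi>)" by auto
    ultimately show "finite (?B \<pi>)" using finite_subset by blast
  qed
  have "Bfmaj m k = (\<Sum>p\<in>Sigma (signed_perms m) ?B. ?F p)" unfolding Bfmaj_def Bgt ..
  also have "\<dots> = (\<Sum>(\<pi>,S)\<in>Sigma (signed_perms m) ?B. ?F (\<pi>,S))" by (rule sum.cong) auto
  also have "\<dots> = (\<Sum>\<pi>\<in>signed_perms m. \<Sum>S\<in>?B \<pi>. ?F (\<pi>,S))"
    by (rule sum.Sigma[symmetric]) (use finite_sp finB in auto)
  also have "\<dots> = (\<Sum>\<pi>\<in>signed_perms m. GL k (toL m \<pi>))"
  proof (rule sum.cong[OF refl])
    fix \<pi> assume p: "\<pi> \<in> signed_perms m"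
    have D: "desB m \<pi> = DL (toL m \<pi>)" by (rule desB_toL[OF p])
    have f: "fmajB m \<pi> = int (fN (toL m \<pi>))"
      unfolding fmajB_def fN_def D negB_toL by simp
    have c: "\<And>j. DL (toL m \<pi>) \<inter> {j..m-1} = {i\<in>DL (toL m \<pi>). j \<le> i}"
      using DL_sub[of "toL m \<pi>"] by auto
    show "(\<Sum>S\<in>?B \<pi>. ?F (\<pi>,S)) = GL k (toL m \<pi>)"
      unfolding GL_def fmajBS_def prod.case f D c ..
  qed
  also have "\<dots> = (\<Sum>xs\<in>sl m. GL k xs)" by (rule sum.reindex_bij_betw[OF bij_toL])
  finally show ?thesis .
qed

lemma odd_sum: "(\<Sum>t<r. 2*t+1) = (r::nat)^2"
  by (induction r) (simp_all add: power2_eq_square)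

lemma KL:
  assumes nn: "(card (DL xs))^2 \<le> fN xs"
  shows "qX^(2*k*card (DL xs)) * GL k xs = qX^(fN xs) * EE qX (card (DL xs)) k"
proof -
  define D where "D = DL xs"
  define r where "r = card D"
  define f where "f = fN xs"
  define c where "c = (\<lambda>j. card {i\<in>D. j \<le> i})"
  have fD: "finite D" unfolding D_def by simp
  have cS: "\<And>j. j \<in> D \<Longrightarrow> c j = Suc (card {i\<in>D. j < i})"
  proof -
    fix j assume j: "j \<in> D"
    have "{i\<in>D. j \<le> i} = insert j {i\<in>D. j < i}" using j by auto
    then show "c j = Suc (card {i\<in>D. j < i})" unfolding c_def using fD by simp
  qed
  have cle: "\<And>j. c j \<le> r" unfolding c_def r_def by (rule card_mono[OF fD]) auto
  have tot: "(\<Sum>j\<in>D. 2 * c j - 1) = r^2"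
  proof -
    have "(\<Sum>j\<in>D. 2 * c j - 1) = (\<Sum>j\<in>D. 2 * card {i\<in>D. j < i} + 1)"
      by (rule sum.cong) (simp_all add: cS)
    also have "\<dots> = (\<Sum>t<r. 2*t+1)" unfolding r_def by (rule rankA[OF fD])
    finally show ?thesis using odd_sum by simp
  qed
  have trm: "qX^(2*k*r) * monom 1 (nat (int f - (\<Sum>j\<in>S. 2 * int (c j) - 1)))
      = qX^f * qX^(\<Sum>j\<in>S. 2*(r - c j) + 1)" if S: "S \<subseteq> D" "card S = k" for S
  proof -
    define a where "a = (\<Sum>j\<in>S. 2 * c j - 1)"
    define b where "b = (\<Sum>j\<in>S. 2*(r - c j) + 1)"
    have fS: "finite S" using S fD finite_subset by blast
    have c1: "\<And>j. j \<in> S \<Longrightarrow> 1 \<le> c j" using S cS by fastforce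
    have "a \<le> (\<Sum>j\<in>D. 2 * c j - 1)" unfolding a_def by (rule sum_mono2[OF fD S(1)]) auto
    then have af: "a \<le> f" using tot nn unfolding f_def r_def D_def by simp
    have ab: "a + b = 2*k*r"
    proof -
      have "a + b = (\<Sum>j\<in>S. (2 * c j - 1) + (2*(r - c j) + 1))" unfolding a_def b_def by (rule sum.distrib[symmetric])
      also have "\<dots> = (\<Sum>j\<in>S. 2*r)"
      proof (rule sum.cong[OF refl])
        fix j assume "j \<in> S"
        then have "1 \<le> c j" "c j \<le> r" using c1 cle by auto
        then show "(2 * c j - 1) + (2*(r - c j) + 1) = 2*r" by linarith
      qed
      finally show ?thesis using S(2) by simp
    qed
    have ia: "(\<Sum>j\<in>S. 2 * int (c j) - 1) = int a"
      unfolding a_def using c1 by (simp add: of_nat_sum of_nat_diff)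
    have "nat (int f - (\<Sum>j\<in>S. 2 * int (c j) - 1)) = f - a" unfolding ia using af by simp
    then have "qX^(2*k*r) * monom 1 (nat (int f - (\<Sum>j\<in>S. 2 * int (c j) - 1))) = qX^(2*k*r + (f - a))"
      by (simp add: monom1 power_add)
    also have "2*k*r + (f - a) = f + b" using ab af by simp
    finally show ?thesis unfolding b_def by (simp add: power_add)
  qed
  have "qX^(2*k*r) * GL k xs = (\<Sum>S\<in>{S. S \<subseteq> D \<and> card S = k}. qX^(2*k*r) * monom 1 (nat (int f - (\<Sum>j\<in>S. 2 * int (c j) - 1))))"
    unfolding GL_def sum_distrib_left D_def f_def c_def ..
  also have "\<dots> = (\<Sum>S\<in>{S. S \<subseteq> D \<and> card S = k}. qX^f * qX^(\<Sum>j\<in>S. 2*(r - c j) + 1))"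
    by (rule sum.cong[OF refl], rule trm) auto
  also have "\<dots> = qX^f * EE qX r k"
    unfolding sum_distrib_left[symmetric] r_def c_def using markC[OF fD, where k=k and x=qX] by simp
  finally show ?thesis unfolding r_def f_def D_def .
qed

lemma card_le_s: "finite D \<Longrightarrow> (s::nat) \<notin> D \<Longrightarrow> card D \<le> s + card {i\<in>D. s<i}"
proof -
  assume fD: "finite D" and s: "s \<notin> D"
  have "D \<subseteq> {i\<in>D. i<s} \<union> {i\<in>D. s<i}"
  proof
    fix x assume x: "x \<in> D"
    then have "x \<noteq> s" using s by blast
    then have "x < s \<or> s < x" by linarith
    then show "x \<in> {i\<in>D. i<s} \<union> {i\<in>D. s<i}" using x by blast
  qed
  then have "card D \<le> card ({i\<in>D. i<s} \<union> {i\<in>D. s<i})" by (rule card_mono[rotated]) (use fD in auto)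
  also have "\<dots> \<le> card {i\<in>D. i<s} + card {i\<in>D. s<i}" by (rule card_Un_le)
  also have "card {i\<in>D. i<s} \<le> card {..<s}" by (rule card_mono) auto
  finally show ?thesis by simp
qed

lemma NN: "xs \<in> sl m \<Longrightarrow> (card (DL xs))^2 \<le> fN xs"
proof (induction m arbitrary: xs)
  case 0
  then have "xs = []" using sl_length by auto
  then show ?case by (simp add: DL_def)
next
  case (Suc m)
  obtain xs' s e where d: "xs' \<in> sl m" "s \<le> m" "\<bar>e\<bar> = int (Suc m)" "xs = ins s e xs'"
    using sl_decomp[OF Suc.prems] by blast
  have e: "e = int (Suc m) \<or> e = - int (Suc m)" using d(3) by auto
  note st = ins_stats[OF d(1) d(2) e]
  have IH: "(card (DL xs'))^2 \<le> fN xs'" using Suc.IH[OF d(1)] .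
  show ?case
  proof (cases "(e>0 \<and> s=m) \<or> s \<in> DL xs'")
    case True
    then show ?thesis using st IH d(4) by auto
  next
    case False
    then have sD: "s \<notin> DL xs'" by auto
    have cl: "card (DL xs') \<le> s + card {i\<in>DL xs'. s<i}" by (rule card_le_s[OF finite_DL sD])
    have r: "card (DL xs) = Suc (card (DL xs'))" using st(1) False d(4) by simp
    have f: "fN xs \<ge> fN xs' + 2*card {i\<in>DL xs'. s<i} + 1 + 2*s" using st(2) False d(4) by auto
    show ?thesis unfolding r using IH cl f by (simp add: power2_eq_square)
  qed
qed



lemma fin_alg:
  fixes x :: "'a::comm_ring_1"
  assumes E1: "E1 = A + x^(2*r+1) * B"
    and I2: "(x^(2*j+2) - 1) * A = (x^(2*r+1) - x^(2*j+1)) * B"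
    and jm: "j \<le> m"
  shows "x^(2*Suc j) * F * A * (x^(2*r+1) - 1) + F * E1 * (x^(2*m+2) - x^(2*r+1))
       = (x^(2*Suc m - 2*Suc j) - 1) * (x^(2*Suc j) * F * A) + (x^(2*Suc m - 2*Suc j + 1) - 1) * (x^(2*r + 2*Suc j) * F * B)"
proof -
  obtain N where N: "m = j + N" using jm le_Suc_ex by blast
  define a where "a = x^(2*j+1)"
  define b where "b = x^(2*r+1)"
  define c where "c = x^(2*N)"
  have p1: "x^(2*Suc j) = a * x" unfolding a_def by simp
  have p2: "x^(2*m+2) = c * a * x" unfolding a_def c_def N by (simp add: power_add algebra_simps)
  have p3: "x^(2*Suc m - 2*Suc j) = c" unfolding c_def N by simp
  have p4: "x^(2*Suc m - 2*Suc j + 1) = c * x" unfolding c_def N by simp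
  have p5: "x^(2*r + 2*Suc j) = b * a" unfolding a_def b_def by (simp add: power_add algebra_simps)
  have p6: "x^(2*j+2) = a * x" unfolding a_def by simp
  have I2': "(a * x - 1) * A = (b - a) * B" using I2 unfolding p6 a_def b_def .
  have "x^(2*Suc j) * F * A * (x^(2*r+1) - 1) + F * E1 * (x^(2*m+2) - x^(2*r+1))
       - ((x^(2*Suc m - 2*Suc j) - 1) * (x^(2*Suc j) * F * A) + (x^(2*Suc m - 2*Suc j + 1) - 1) * (x^(2*r + 2*Suc j) * F * B))
       = F * b * ((a * x - 1) * A - (b - a) * B)"
    unfolding p1 p2 p3 p4 p5 E1 b_def[symmetric] by (simp add: algebra_simps)
  also have "\<dots> = 0" using I2' by simp
  finally show ?thesis by simp
qed

definition pX :: "int poly" where "pX = [:0,1:]"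

lemma qX1_nz: "qX - 1 \<noteq> 0"
proof
  assume "qX - 1 = 0"
  then have "coeff (qX - 1) 1 = coeff 0 1" by simp
  then show False by simp
qed

lemma qint_mult': "([:0,1:] - 1) * qint t = qX^t - 1"
  using qint_mult[of t] by (simp add: mult.commute)

lemma lin2: "((x::'a::comm_ring_1) - 1) * A = A' \<Longrightarrow> (x - 1) * B = B' \<Longrightarrow> (x - 1) * (K1 * A + K2 * B) = K1 * A' + K2 * B'"
proof -
  assume a: "(x - 1) * A = A'" and b: "(x - 1) * B = B'"
  have "(x - 1) * (K1 * A + K2 * B) = K1 * ((x - 1) * A) + K2 * ((x - 1) * B)" by (simp add: algebra_simps)
  then show ?thesis unfolding a b .
qed

lemma PX:
  assumes xs: "xs \<in> sl m" and k: "k \<le> Suc m"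
  shows "(\<Sum>s\<le>m. GL k (ins s (int (Suc m)) xs) + GL k (ins s (- int (Suc m)) xs))
       = qint (2*Suc m - 2*k) * GL k xs + (if k = 0 then 0 else qint (2*Suc m - 2*k + 1) * GL (k-1) xs)"
proof -
  define D where "D = DL xs"
  define r where "r = card D"
  define f where "f = fN xs"
  define c where "c = (\<lambda>s. card {i\<in>D. s<i})"
  define Z where "Z = pX^(2*k*Suc r)"
  define K1 where "K1 = pX^(2*k) * pX^f * EE pX r k"
  define K2 where "K2 = pX^f * EE pX (Suc r) k"
  let ?n = "int (Suc m)"
  have len: "length xs = m" using sl_length[OF xs] .
  have fD: "finite D" unfolding D_def by simp
  have Dsub: "D \<subseteq> {0..<m}" using DL_sub[of xs] len unfolding D_def by simp
  have Dsub': "D \<subseteq> {0..<Suc m}" using Dsub by auto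
  have rm: "r \<le> m" unfolding r_def using card_mono[OF _ Dsub] by simp
  have mD: "m \<notin> D" using Dsub by auto
  have Zs: "Z = pX^(2*k) * pX^(2*k*r)" unfolding Z_def by (simp add: power_add[symmetric] algebra_simps)
  have KLx: "pX^(2*k*r) * GL k xs = pX^f * EE pX r k"
    unfolding r_def f_def D_def by (rule KL[OF NN[OF xs], folded pX_def])
  have KLy: "pX^(2*k*card (DL y)) * GL k y = pX^(fN y) * EE pX (card (DL y)) k" if "y \<in> sl (Suc m)" for y
    by (rule KL[OF NN[OF that], folded pX_def])
  have ye: "ins s e xs \<in> sl (Suc m)" if "s \<le> m" "e = ?n \<or> e = - ?n" for s e
    using ins_in_sl[OF xs that(1)] that(2) by auto
  have same: "Z * GL k (ins s e xs) = K1 * pX^t"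
    if s: "s \<le> m" and e: "e = ?n \<or> e = - ?n" and cr: "card (DL (ins s e xs)) = r" and cf: "fN (ins s e xs) = f + t" for s e t
  proof -
    have "Z * GL k (ins s e xs) = pX^(2*k) * (pX^(2*k*card (DL (ins s e xs))) * GL k (ins s e xs))"
      unfolding Zs cr by (simp add: algebra_simps)
    also have "\<dots> = pX^(2*k) * (pX^(f+t) * EE pX r k)" using KLy[OF ye[OF s e]] unfolding cr cf by simp
    finally show ?thesis unfolding K1_def by (simp add: power_add algebra_simps)
  qed
  have new: "Z * GL k (ins s e xs) = K2 * pX^t"
    if s: "s \<le> m" and e: "e = ?n \<or> e = - ?n" and cr: "card (DL (ins s e xs)) = Suc r" and cf: "fN (ins s e xs) = f + t" for s e t
  proof -
    have "Z * GL k (ins s e xs) = pX^(2*k*card (DL (ins s e xs))) * GL k (ins s e xs)"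
      unfolding Z_def cr ..
    also have "\<dots> = pX^(f+t) * EE pX (Suc r) k" using KLy[OF ye[OF s e]] unfolding cr cf by simp
    finally show ?thesis unfolding K2_def by (simp add: power_add algebra_simps)
  qed
  note st = ins_stats[OF xs, folded D_def r_def f_def]
  have P1: "Z * GL k (ins m ?n xs) = K1"
    using same[of m ?n 0] st[of m ?n] by simp
  have P2: "Z * GL k (ins s ?n xs) = K1 * pX^(2 * c s + 2)" if "s \<in> D" for s
    using same[of s ?n "2 * c s + 2"] st[of s ?n] that mD Dsub unfolding c_def by (auto simp: algebra_simps)
  have P3: "Z * GL k (ins s ?n xs) = K2 * pX^(2 * (s + c s) + 2)" if "s \<in> {0..<m} - D" for s
    using new[of s ?n "2 * (s + c s) + 2"] st[of s ?n] that unfolding c_def by (auto simp: algebra_simps)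
  have M2: "Z * GL k (ins s (- ?n) xs) = K1 * pX^(2 * c s + 1)" if "s \<in> D" for s
    using same[of s "- ?n" "2 * c s + 1"] st[of s "- ?n"] that Dsub unfolding c_def by (auto simp: algebra_simps)
  have M3: "Z * GL k (ins s (- ?n) xs) = K2 * pX^(2 * (s + c s) + 1)" if "s \<in> {0..<Suc m} - D" for s
    using new[of s "- ?n" "2 * (s + c s) + 1"] st[of s "- ?n"] that unfolding c_def by (auto simp: algebra_simps)
  have SP: "(\<Sum>s\<le>m. Z * GL k (ins s ?n xs)) = K1 + K1 * (\<Sum>j<r. pX^(2*j+2)) + K2 * (\<Sum>j\<in>{r..<m}. pX^(2*j+2))"
  proof -
    have "(\<Sum>s\<le>m. Z * GL k (ins s ?n xs)) = (\<Sum>s\<in>{0..<m}. Z * GL k (ins s ?n xs)) + Z * GL k (ins m ?n xs)"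
      by (simp add: atLeast0LessThan lessThan_Suc_atMost[symmetric])
    also have "(\<Sum>s\<in>{0..<m}. Z * GL k (ins s ?n xs)) = (\<Sum>s\<in>{0..<m} - D. Z * GL k (ins s ?n xs)) + (\<Sum>s\<in>D. Z * GL k (ins s ?n xs))"
      by (rule sum.subset_diff[OF Dsub]) simp
    also have "(\<Sum>s\<in>{0..<m} - D. Z * GL k (ins s ?n xs)) = (\<Sum>s\<in>{0..<m} - D. K2 * pX^(2 * (s + c s) + 2))"
      by (rule sum.cong[OF refl]) (rule P3)
    also have "\<dots> = K2 * (\<Sum>j\<in>{r..<m}. pX^(2*j+2))"
      unfolding sum_distrib_left[symmetric] c_def r_def using rankB[OF Dsub, of "\<lambda>j. pX^(2*j+2)"] by simp
    also have "(\<Sum>s\<in>D. Z * GL k (ins s ?n xs)) = (\<Sum>s\<in>D. K1 * pX^(2 * c s + 2))"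
      by (rule sum.cong[OF refl]) (rule P2)
    also have "\<dots> = K1 * (\<Sum>j<r. pX^(2*j+2))"
      unfolding sum_distrib_left[symmetric] c_def r_def using rankA[OF fD, of "\<lambda>j. pX^(2*j+2)"] by simp
    finally show ?thesis unfolding P1 by (simp add: algebra_simps)
  qed
  have SM: "(\<Sum>s\<le>m. Z * GL k (ins s (- ?n) xs)) = K1 * (\<Sum>j<r. pX^(2*j+1)) + K2 * (\<Sum>j\<in>{r..<Suc m}. pX^(2*j+1))"
  proof -
    have "(\<Sum>s\<le>m. Z * GL k (ins s (- ?n) xs)) = (\<Sum>s\<in>{0..<Suc m}. Z * GL k (ins s (- ?n) xs))"
      by (simp add: atLeast0LessThan lessThan_Suc_atMost)
    also have "\<dots> = (\<Sum>s\<in>{0..<Suc m} - D. Z * GL k (ins s (- ?n) xs)) + (\<Sum>s\<in>D. Z * GL k (ins s (- ?n) xs))"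
      by (rule sum.subset_diff[OF Dsub']) simp
    also have "(\<Sum>s\<in>{0..<Suc m} - D. Z * GL k (ins s (- ?n) xs)) = (\<Sum>s\<in>{0..<Suc m} - D. K2 * pX^(2 * (s + c s) + 1))"
      by (rule sum.cong[OF refl]) (rule M3)
    also have "\<dots> = K2 * (\<Sum>j\<in>{r..<Suc m}. pX^(2*j+1))"
      unfolding sum_distrib_left[symmetric] c_def r_def using rankB[OF Dsub', of "\<lambda>j. pX^(2*j+1)"] by simp
    also have "(\<Sum>s\<in>D. Z * GL k (ins s (- ?n) xs)) = (\<Sum>s\<in>D. K1 * pX^(2 * c s + 1))"
      by (rule sum.cong[OF refl]) (rule M2)
    also have "\<dots> = K1 * (\<Sum>j<r. pX^(2*j+1))"
      unfolding sum_distrib_left[symmetric] c_def r_def using rankA[OF fD, of "\<lambda>j. pX^(2*j+1)"] by simp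
    finally show ?thesis by (simp add: algebra_simps)
  qed
  let ?L = "(\<Sum>s\<le>m. GL k (ins s ?n xs) + GL k (ins s (- ?n) xs))"
  let ?R = "qint (2*Suc m - 2*k) * GL k xs + (if k = 0 then 0 else qint (2*Suc m - 2*k + 1) * GL (k-1) xs)"
  have ZL: "Z * ?L = K1 * (1 + (\<Sum>j<r. pX^(2*j+1) + pX^(2*j+2))) + K2 * ((\<Sum>j\<in>{r..<m}. pX^(2*j+2)) + (\<Sum>j\<in>{r..<Suc m}. pX^(2*j+1)))"
    unfolding sum_distrib_left distrib_left sum.distrib SP SM by (simp add: algebra_simps sum.distrib)
  have LL: "(pX - 1) * (Z * ?L) = K1 * (pX^(2*r+1) - 1) + K2 * (pX^(2*m+2) - pX^(2*r+1))"
    unfolding ZL by (rule lin2[OF geo1 geo2[OF rm]])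
  have ZR1: "Z * GL k xs = K1" unfolding Zs K1_def using KLx by (simp add: algebra_simps)
  have RR: "(pX - 1) * (Z * ?R) = (pX^(2*Suc m - 2*k) - 1) * K1 +
      (if k = 0 then 0 else (pX^(2*Suc m - 2*k + 1) - 1) * (pX^(2*r + 2*k) * pX^f * EE pX r (k-1)))"
  proof (cases k)
    case 0
    have "(pX - 1) * (Z * ?R) = ((pX - 1) * qint (2*Suc m - 2*k)) * (Z * GL k xs)"
      using 0 by (simp add: algebra_simps)
    then show ?thesis unfolding qint_mult'[folded pX_def] ZR1 using 0 by simp
  next
    case (Suc j)
    have Zj: "Z = pX^(2*r + 2*k) * pX^(2*j*r)" unfolding Z_def Suc by (simp add: power_add[symmetric] algebra_simps)
    have KLj: "pX^(2*j*r) * GL j xs = pX^f * EE pX r j"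
      unfolding r_def f_def D_def by (rule KL[OF NN[OF xs], folded pX_def])
    have ZR2: "Z * GL j xs = pX^(2*r + 2*k) * pX^f * EE pX r j" unfolding Zj using KLj by (simp add: algebra_simps)
    have "(pX - 1) * (Z * ?R) = ((pX - 1) * qint (2*Suc m - 2*k)) * (Z * GL k xs) + ((pX - 1) * qint (2*Suc m - 2*k + 1)) * (Z * GL j xs)"
      using Suc by (simp add: algebra_simps)
    then show ?thesis unfolding qint_mult'[folded pX_def] ZR1 ZR2 using Suc by simp
  qed
  have eq: "(pX - 1) * (Z * ?L) = (pX - 1) * (Z * ?R)"
  proof (cases k)
    case 0
    have "K1 = pX^f" "K2 = pX^f" unfolding K1_def K2_def 0 by simp_all
    then show ?thesis unfolding LL RR using 0 by (simp add: algebra_simps power_add[symmetric])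
  next
    case (Suc j)
    have E1: "EE pX (Suc r) (Suc j) = EE pX r (Suc j) + pX^(2*r+1) * EE pX r j" by simp
    have jm: "j \<le> m" using k Suc by simp
    show ?thesis unfolding LL RR K1_def K2_def using fin_alg[OF E1 EE_I2 jm, of "pX^f"] Suc by simp
  qed
  have pX0: "pX \<noteq> 0" unfolding pX_def by simp
  have nz: "(pX - 1) * Z \<noteq> 0" unfolding Z_def using qX1_nz[folded pX_def] pX0 by simp
  show ?thesis using eq nz by (simp add: mult.assoc[symmetric])
qed

lemma sl_image:
  "sl (Suc m) = (\<lambda>(xs, s, e). ins s e xs) ` (sl m \<times> ({..m} \<times> {int (Suc m), - int (Suc m)}))"
proof (intro equalityI subsetI)
  fix ys assume "ys \<in> sl (Suc m)"
  then obtain xs s e where d: "xs \<in> sl m" "s \<le> m" "\<bar>e\<bar> = int (Suc m)" "ys = ins s e xs"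
    using sl_decomp by blast
  have "e \<in> {int (Suc m), - int (Suc m)}" using d(3) by auto
  then have "(xs, s, e) \<in> sl m \<times> ({..m} \<times> {int (Suc m), - int (Suc m)})" using d by auto
  then show "ys \<in> (\<lambda>(xs, s, e). ins s e xs) ` (sl m \<times> ({..m} \<times> {int (Suc m), - int (Suc m)}))"
    using d(4) by force
next
  fix ys assume "ys \<in> (\<lambda>(xs, s, e). ins s e xs) ` (sl m \<times> ({..m} \<times> {int (Suc m), - int (Suc m)}))"
  then obtain xs s e where d: "xs \<in> sl m" "s \<le> m" "e \<in> {int (Suc m), - int (Suc m)}" "ys = ins s e xs" by auto
  have "\<bar>e\<bar> = int (Suc m)" using d(3) by auto
  then show "ys \<in> sl (Suc m)" using ins_in_sl[OF d(1) d(2)] d(4) by simp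
qed

lemma sl_inj: "inj_on (\<lambda>(xs, s, e). ins s e xs) (sl m \<times> ({..m} \<times> {int (Suc m), - int (Suc m)}))"
proof (rule inj_onI)
  fix p q assume p: "p \<in> sl m \<times> ({..m} \<times> {int (Suc m), - int (Suc m)})"
    and q: "q \<in> sl m \<times> ({..m} \<times> {int (Suc m), - int (Suc m)})"
    and eq: "(\<lambda>(xs, s, e). ins s e xs) p = (\<lambda>(xs, s, e). ins s e xs) q"
  obtain xs s e where pp: "p = (xs, s, e)" by (cases p) auto
  obtain xs' s' e' where qq: "q = (xs', s', e')" by (cases q) auto
  have a: "xs \<in> sl m" "s \<le> m" "\<bar>e\<bar> = int (Suc m)" using p pp by auto
  have b: "xs' \<in> sl m" "s' \<le> m" "\<bar>e'\<bar> = int (Suc m)" using q qq by auto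
  have "ins s e xs = ins s' e' xs'" using eq pp qq by simp
  then have "xs = xs' \<and> s = s' \<and> e = e'" by (rule ins_inj[OF a(1) b(1) a(2) b(2) a(3) b(3)])
  then show "p = q" using pp qq by simp
qed

theorem proposition2p7:
  fixes n k :: nat
  assumes "n \<ge> 1" and "k \<le> n"
  shows "Bfmaj n k = qint (2*n - 2*k) * Bfmaj (n-1) k
           + (if k = 0 then 0 else qint (2*n - 2*k + 1) * Bfmaj (n-1) (k-1))"
proof -
  obtain m where n: "n = Suc m" using assms(1) by (cases n) auto
  have k: "k \<le> Suc m" using assms(2) n by simp
  let ?a = "int (Suc m)" and ?b = "- int (Suc m)"
  let ?A = "sl m \<times> ({..m} \<times> {?a, ?b})"
  have ab: "?a \<noteq> ?b" by simp
  have "Bfmaj n k = (\<Sum>ys\<in>sl (Suc m). GL k ys)" unfolding n by (rule Bfmaj_GL)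
  also have "\<dots> = (\<Sum>p\<in>?A. GL k ((\<lambda>(xs, s, e). ins s e xs) p))"
    unfolding sl_image by (rule sum.reindex[OF sl_inj, unfolded comp_def])
  also have "\<dots> = (\<Sum>(xs, s, e)\<in>?A. GL k (ins s e xs))"
    by (rule sum.cong) auto
  also have "\<dots> = (\<Sum>xs\<in>sl m. \<Sum>(s, e)\<in>{..m} \<times> {?a, ?b}. GL k (ins s e xs))"
    by (rule sum.cartesian_product[symmetric])
  also have "\<dots> = (\<Sum>xs\<in>sl m. \<Sum>s\<le>m. GL k (ins s ?a xs) + GL k (ins s ?b xs))"
  proof (rule sum.cong[OF refl])
    fix xs
    have "(\<Sum>(s, e)\<in>{..m} \<times> {?a, ?b}. GL k (ins s e xs)) = (\<Sum>s\<le>m. \<Sum>e\<in>{?a, ?b}. GL k (ins s e xs))"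
      by (rule sum.cartesian_product[symmetric])
    also have "\<dots> = (\<Sum>s\<le>m. GL k (ins s ?a xs) + GL k (ins s ?b xs))"
      by (rule sum.cong[OF refl]) (simp add: ab)
    finally show "(\<Sum>(s, e)\<in>{..m} \<times> {?a, ?b}. GL k (ins s e xs)) = (\<Sum>s\<le>m. GL k (ins s ?a xs) + GL k (ins s ?b xs))" .
  qed
  also have "\<dots> = (\<Sum>xs\<in>sl m. qint (2*Suc m - 2*k) * GL k xs + (if k = 0 then 0 else qint (2*Suc m - 2*k + 1) * GL (k-1) xs))"
    by (rule sum.cong[OF refl]) (rule PX[OF _ k])
  also have "\<dots> = qint (2*Suc m - 2*k) * (\<Sum>xs\<in>sl m. GL k xs) + (if k = 0 then 0 else qint (2*Suc m - 2*k + 1) * (\<Sum>xs\<in>sl m. GL (k-1) xs))"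
    by (simp add: sum.distrib sum_distrib_left)
  also have "\<dots> = qint (2*n - 2*k) * Bfmaj (n-1) k + (if k = 0 then 0 else qint (2*n - 2*k + 1) * Bfmaj (n-1) (k-1))"
    unfolding n Bfmaj_GL by simp
  finally show ?thesis .
qed


end
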